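(* Let $\Omega\subset\mathbb{R}^N$ be a bounded domain, $\delta>0$, and let $G$ be a domain with $\overline G\subset\Omega$, $\partial G\in C^1$, $G$ satisfying the interior sphere condition and $\partial G=\Gamma_\delta$. Then: (i) $\Omega=G+B_\delta(0)=\{x+y: x\in G,\ y\in B_\delta(0)\}$; (ii) for any unit vector $\xi$ and $\lambda\in\mathbb{R}$, if $\mathcal{R}_\lambda(G_\lambda)\subset G$ then $\mathcal{R}_\lambda(\Omega_\lambda)\subset\Omega$.
   Context: $d(x)=\min_{y\in\mathbb{R}^N\setminus\Omega}|x-y|$ and $\Gamma_\delta=\{x\in\Omega:d(x)=\delta\}$. For a unit vector $\xi$ and $\lambda\in\mathbb{R}$, $\mathcal{R}_\lambda x=x+2(\lambda-x\cdot\xi)\xi$ is the reflection in the hyperplane $\{x\cdot\xi=\lambda\}$, and $G_\lambda=\{x\in G: x\cdot\xi>\lambda\}$, $\Omega_\lambda=\{x\in\Omega: x\cdot\xi>\lambda\}$. *)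

theory Defs
  imports "HOL-Analysis.Analysis"
begin

definition is_domain :: "'a::euclidean_space set \<Rightarrow> bool" where
  "is_domain S \<longleftrightarrow> S \<noteq> {} \<and> open S \<and> connected S"

definition dist_bdry :: "'a::euclidean_space set \<Rightarrow> 'a \<Rightarrow> real" where
  "dist_bdry \<Omega> x = infdist x (- \<Omega>)"

definition Gamma :: "'a::euclidean_space set \<Rightarrow> real \<Rightarrow> 'a set" where
  "Gamma \<Omega> \<delta> = {x \<in> \<Omega>. dist_bdry \<Omega> x = \<delta>}"

definition refl_hp :: "'a::euclidean_space \<Rightarrow> real \<Rightarrow> 'a \<Rightarrow> 'a" where
  "refl_hp \<xi> lam x = x + (2 * (lam - x \<bullet> \<xi>)) *\<^sub>R \<xi>"

definition cap :: "'a::euclidean_space set \<Rightarrow> 'a \<Rightarrow> real \<Rightarrow> 'a set" where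
  "cap S \<xi> lam = {x \<in> S. x \<bullet> \<xi> > lam}"

definition C1_fun :: "('a::euclidean_space \<Rightarrow> real) \<Rightarrow> bool" where
  "C1_fun \<phi> \<longleftrightarrow> (\<exists>\<phi>'. (\<forall>x. (\<phi> has_derivative blinfun_apply (\<phi>' x)) (at x))
                       \<and> continuous_on UNIV \<phi>')"

text \<open>C^1 boundary: near every boundary point p, after choosing a unit direction nu
  (a rotated coordinate system), G is the region above the graph of a C^1 function
  defined on the hyperplane orthogonal to nu.\<close>
definition C1_boundary :: "'a::euclidean_space set \<Rightarrow> bool" where
  "C1_boundary G \<longleftrightarrow>
     (\<forall>p\<in>frontier G. \<exists>r \<nu> \<phi>. r > 0 \<and> norm \<nu> = 1 \<and> C1_fun \<phi> \<and>
        G \<inter> ball p r = {x \<in> ball p r. x \<bullet> \<nu> > \<phi> (x - (x \<bullet> \<nu>) *\<^sub>R \<nu>)})"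

definition interior_sphere_condition :: "'a::euclidean_space set \<Rightarrow> bool" where
  "interior_sphere_condition G \<longleftrightarrow>
     (\<forall>p\<in>frontier G. \<exists>c r. r > 0 \<and> ball c r \<subseteq> G \<and> p \<in> sphere c r)"

end

theory Submission
  imports Defs
begin

lemma infdist_attain:
  fixes x :: "'a::euclidean_space"
  assumes "closed S" "S \<noteq> {}"
  shows "\<exists>z\<in>S. infdist x S = dist x z"
proof -
  obtain z where z: "z \<in> S" "\<And>y. y \<in> S \<Longrightarrow> dist x z \<le> dist x y"
    using distance_attains_inf[OF assms] by blast
  have "infdist x S \<le> dist x z" using z(1) by (rule infdist_le)
  moreover have "dist x z \<le> infdist x S"
    unfolding infdist_notempty[OF assms(2)] using z assms(2) by (auto intro: cINF_greatest)
  ultimately show ?thesis using z by auto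
qed

lemma infdist_lessE:
  fixes x :: "'a::euclidean_space"
  assumes "A \<noteq> {}" "infdist x A < d"
  shows "\<exists>a\<in>A. dist x a < d"
proof (rule ccontr)
  assume "\<not> ?thesis"
  then have "d \<le> infdist x A"
    unfolding infdist_notempty[OF assms(1)] using assms(1) by (auto intro!: cINF_greatest simp: not_less)
  then show False using assms by simp
qed

lemma tangent_point:
  fixes w g c :: "'a::euclidean_space"
  assumes r: "r > 0" and d: "\<delta> > 0" and wg: "dist w g = \<delta>" and cg: "dist c g = r"
    and far: "\<And>p. p \<in> ball c r \<Longrightarrow> dist w p \<ge> \<delta>"
  shows "w = g + (\<delta> / r) *\<^sub>R (g - c)"
proof -
  have ge: "dist w c \<ge> r + \<delta>"
  proof (rule ccontr)
    assume "\<not> ?thesis"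
    then have lt: "dist w c < r + \<delta>" by simp
    define a where "a = dist w c"
    show False
    proof (cases "a < r")
      case True
      then have "w \<in> ball c r" by (simp add: a_def dist_commute)
      from far[OF this] d show False by simp
    next
      case False
      then have ar: "a \<ge> r" by simp
      then have a0: "a > 0" using r by simp
      define t where "t = (max 0 (a - \<delta>) + r) / 2"
      have t1: "t < r" using lt r d unfolding t_def a_def by auto
      have t2: "t > a - \<delta>" using lt r d unfolding t_def a_def by auto
      have t3: "t > 0" using r unfolding t_def by auto
      define p where "p = c + (t / a) *\<^sub>R (w - c)"
      have "dist c p = t" unfolding p_def dist_norm using a0 t3
        by (simp add: a_def dist_norm norm_minus_commute)
      then have "p \<in> ball c r" using t1 by simp
      have "w - p = (1 - t / a) *\<^sub>R (w - c)" unfolding p_def by (simp add: algebra_simps)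
      then have "dist w p = \<bar>1 - t / a\<bar> * a" by (simp add: dist_norm a_def)
      also have "\<bar>1 - t / a\<bar> = 1 - t / a" using t1 ar a0 by (simp add: field_simps)
      also have "(1 - t / a) * a = a - t" using a0 by (simp add: field_simps)
      finally have "dist w p < \<delta>" using t2 by simp
      with far[OF \<open>p \<in> ball c r\<close>] show False by simp
    qed
  qed
  have "dist w c \<le> dist w g + dist g c" by (rule dist_triangle)
  then have "dist w c = dist w g + dist g c" using ge wg cg by (simp add: dist_commute)
  then have "norm (w - g) *\<^sub>R (g - c) = norm (g - c) *\<^sub>R (w - g)"
    using dist_triangle_eq by blast
  then have "\<delta> *\<^sub>R (g - c) = r *\<^sub>R (w - g)"
    using wg cg by (simp add: dist_norm norm_minus_commute)
  then have "(1/r) *\<^sub>R (\<delta> *\<^sub>R (g - c)) = w - g" using r by simp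
  then show ?thesis by (simp add: algebra_simps)
qed

lemma norm_sub_scaled_sq:
  fixes u \<xi> :: "'a::euclidean_space"
  assumes "\<xi> \<bullet> \<xi> = 1"
  shows "(norm (u - c *\<^sub>R \<xi>))\<^sup>2 = (norm u)\<^sup>2 - 2 * c * (u \<bullet> \<xi>) + c\<^sup>2"
proof -
  have "(norm (u - c *\<^sub>R \<xi>))\<^sup>2 = (u - c *\<^sub>R \<xi>) \<bullet> (u - c *\<^sub>R \<xi>)"
    by (simp add: power2_norm_eq_inner)
  also have "\<dots> = u \<bullet> u - 2 * c * (u \<bullet> \<xi>) + c\<^sup>2 * (\<xi> \<bullet> \<xi>)"
    by (simp add: inner_diff_left inner_diff_right inner_commute power2_eq_square algebra_simps)
  finally show ?thesis using assms by (simp add: power2_norm_eq_inner)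
qed

theorem lemma2p8:
  fixes \<Omega> G :: "'a::euclidean_space set" and \<delta> :: real
  assumes "is_domain \<Omega>" and "bounded \<Omega>" and "\<delta> > 0"
    and "is_domain G" and "closure G \<subseteq> \<Omega>"
    and "C1_boundary G" and "interior_sphere_condition G"
    and "frontier G = Gamma \<Omega> \<delta>"
  shows "\<Omega> = {x + y | x y. x \<in> G \<and> y \<in> ball 0 \<delta>}
    \<and> (\<forall>\<xi> lam. norm \<xi> = 1 \<longrightarrow> refl_hp \<xi> lam ` cap G \<xi> lam \<subseteq> G
            \<longrightarrow> refl_hp \<xi> lam ` cap \<Omega> \<xi> lam \<subseteq> \<Omega>)"
proof -
  have oO: "open \<Omega>" and cO: "connected \<Omega>" using assms(1) by (auto simp: is_domain_def)
  have oG: "open G" and Gne: "G \<noteq> {}" using assms(4) by (auto simp: is_domain_def)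
  have d0: "\<delta> > 0" by fact
  have cne: "- \<Omega> \<noteq> {}"
  proof
    assume "- \<Omega> = {}"
    then have "\<Omega> = UNIV" by blast
    with assms(2) show False by simp
  qed
  have ccl: "closed (- \<Omega>)" using oO by auto
  have GO: "G \<subseteq> \<Omega>" using assms(5) closure_subset by blast
  have front: "\<And>p. p \<in> frontier G \<Longrightarrow> p \<in> \<Omega> \<and> infdist p (- \<Omega>) = \<delta>"
    using assms(8) by (auto simp: Gamma_def dist_bdry_def)
  have L1: "infdist p (- \<Omega>) \<ge> \<delta>" if pG: "p \<in> G" for p
  proof (rule ccontr)
    assume "\<not> ?thesis"
    then have lt: "infdist p (- \<Omega>) < \<delta>" by simp
    obtain z where z: "z \<in> - \<Omega>" "infdist p (- \<Omega>) = dist p z"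
      using infdist_attain[OF ccl cne] by blast
    have "closed_segment p z \<inter> G \<noteq> {}" using pG by auto
    moreover have "closed_segment p z - G \<noteq> {}" using z GO by auto
    ultimately obtain w where w: "w \<in> closed_segment p z" "w \<in> frontier G"
      using connected_Int_frontier[OF connected_segment] by blast
    have "infdist w (- \<Omega>) \<le> dist w z" using z(1) by (rule infdist_le)
    also have "\<dots> \<le> dist p z" using dist_in_closed_segment[OF w(1)] by simp
    finally show False using front[OF w(2)] lt z by simp
  qed
  have L1': "infdist p (- \<Omega>) \<ge> \<delta>" if "p \<in> closure G" for p
    using that L1 front closure_Un_frontier[of G] by fastforce
  have inO: "q \<in> \<Omega>" if "p \<in> closure G" "dist p q < \<delta>" for p q
  proof (rule ccontr)
    assume "q \<notin> \<Omega>"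
    then have "infdist p (- \<Omega>) \<le> dist p q" by (intro infdist_le) auto
    with L1'[OF that(1)] that(2) show False by simp
  qed
  have sum_in: "x + y \<in> \<Omega>" if "x \<in> G" "norm y < \<delta>" for x y
    using inO[of x "x + y"] that closure_subset by (auto simp: dist_norm)
  have K: "infdist x G \<noteq> \<delta>" if xO: "x \<in> \<Omega>" for x
  proof
    assume eq: "infdist x G = \<delta>"
    have "closure G \<noteq> {}" using Gne by auto
    then obtain g where g: "g \<in> closure G" "infdist x (closure G) = dist x g"
      using infdist_attain[of "closure G" x] by blast
    have "infdist x (closure G) = infdist x G"
      by (simp add: infdist_eq_setdist)
    then have xg: "dist x g = \<delta>" using g eq by simp
    have farx: "dist x p \<ge> \<delta>" if "p \<in> G" for p
      using infdist_le[OF that, of x] eq by simp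
    have gG: "g \<notin> G"
    proof
      assume "g \<in> G"
      then obtain e where e: "e > 0" "ball g e \<subseteq> G" using oG open_contains_ball by blast
      define t where "t = min (1/2) (e / (2 * \<delta>))"
      have t0: "t > 0" "t < 1" using e d0 by (auto simp: t_def)
      have te: "t * \<delta> < e" using e d0
        by (auto simp: t_def min_def field_simps)
      define p where "p = g + t *\<^sub>R (x - g)"
      have "dist g p = t * \<delta>" using t0 xg
        by (simp add: p_def dist_norm dist_commute norm_minus_commute)
      then have "p \<in> G" using e te by auto
      have "x - p = (1 - t) *\<^sub>R (x - g)" by (simp add: p_def algebra_simps)
      then have "dist x p = (1 - t) * \<delta>" using t0 xg by (simp add: dist_norm)
      moreover have "t * \<delta> > 0" using t0 d0 by simp
      ultimately have "dist x p < \<delta>" by (simp add: algebra_simps)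
      with farx[OF \<open>p \<in> G\<close>] show False by simp
    qed
    then have gF: "g \<in> frontier G" using g(1) oG by (simp add: frontier_def interior_open)
    obtain z where z: "z \<in> - \<Omega>" "infdist g (- \<Omega>) = dist g z"
      using infdist_attain[OF ccl cne] by blast
    have gz: "dist z g = \<delta>" using z front[OF gF] by (simp add: dist_commute)
    obtain c r where cr: "r > 0" "ball c r \<subseteq> G" "g \<in> sphere c r"
      using assms(7) gF unfolding interior_sphere_condition_def by blast
    have cg: "dist c g = r" using cr(3) by simp
    have farz: "dist z p \<ge> \<delta>" if "p \<in> G" for p
    proof -
      have "infdist p (- \<Omega>) \<le> dist p z" using z(1) by (rule infdist_le)
      with L1[OF that] show ?thesis by (simp add: dist_commute)
    qed
    have "x = g + (\<delta> / r) *\<^sub>R (g - c)"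
      proof (rule tangent_point[OF cr(1) d0 xg cg])
      fix p assume "p \<in> ball c r"
      then show "dist x p \<ge> \<delta>" using farx cr(2) by blast
    qed
    moreover have "z = g + (\<delta> / r) *\<^sub>R (g - c)"
      proof (rule tangent_point[OF cr(1) d0 gz cg])
      fix p assume "p \<in> ball c r"
      then show "dist z p \<ge> \<delta>" using farz cr(2) by blast
    qed
    ultimately show False using xO z(1) by simp
  qed
  have allA: "infdist x G < \<delta>" if xO: "x \<in> \<Omega>" for x
  proof -
    define A where "A = {x. infdist x G < \<delta>}"
    define B where "B = {x. \<delta> < infdist x G}"
    have oA: "open A" unfolding A_def
      by (intro open_Collect_less continuous_intros)
    have oB: "open B" unfolding B_def
      by (intro open_Collect_less continuous_intros)
    have "A \<inter> B \<inter> \<Omega> = {}" unfolding A_def B_def by auto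
    moreover have "\<Omega> \<subseteq> A \<union> B" unfolding A_def B_def using K by fastforce
    ultimately have "A \<inter> \<Omega> = {} \<or> B \<inter> \<Omega> = {}" using connectedD[OF cO oA oB] by blast
    moreover have "A \<inter> \<Omega> \<noteq> {}"
    proof -
      obtain g0 where "g0 \<in> G" using Gne by blast
      then have "g0 \<in> A \<inter> \<Omega>" using GO d0 unfolding A_def by auto
      then show ?thesis by blast
    qed
    ultimately have "B \<inter> \<Omega> = {}" by blast
    then have "\<not> \<delta> < infdist x G" using xO unfolding B_def by blast
    then show ?thesis using K[OF xO] by linarith
  qed
  have P1: "\<Omega> = {x + y | x y. x \<in> G \<and> y \<in> ball 0 \<delta>}"
  proof
    show "\<Omega> \<subseteq> {x + y | x y. x \<in> G \<and> y \<in> ball 0 \<delta>}"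
    proof
      fix x assume "x \<in> \<Omega>"
      then obtain g where g: "g \<in> G" "dist x g < \<delta>" using infdist_lessE[OF Gne allA] by blast
      then have "x = g + (x - g) \<and> g \<in> G \<and> x - g \<in> ball 0 \<delta>" by (simp add: dist_norm norm_minus_commute)
      then show "x \<in> {x + y | x y. x \<in> G \<and> y \<in> ball 0 \<delta>}" by blast
    qed
    show "{x + y | x y. x \<in> G \<and> y \<in> ball 0 \<delta>} \<subseteq> \<Omega>"
      using sum_in by auto
  qed
  have P2: "refl_hp \<xi> lam ` cap \<Omega> \<xi> lam \<subseteq> \<Omega>"
    if n1: "norm \<xi> = 1" and RG: "refl_hp \<xi> lam ` cap G \<xi> lam \<subseteq> G" for \<xi> lam
  proof
    fix q assume "q \<in> refl_hp \<xi> lam ` cap \<Omega> \<xi> lam"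
    then obtain x where x: "x \<in> \<Omega>" "x \<bullet> \<xi> > lam" "q = refl_hp \<xi> lam x"
      by (auto simp: cap_def)
    obtain g where g: "g \<in> G" "dist x g < \<delta>" using infdist_lessE[OF Gne allA[OF x(1)]] by blast
    have xi: "\<xi> \<bullet> \<xi> = 1" using n1 by (simp add: norm_eq_1)
    show "q \<in> \<Omega>"
    proof (cases "g \<bullet> \<xi> > lam")
      case True
      then have Rg: "refl_hp \<xi> lam g \<in> G" using RG g(1) by (auto simp: cap_def)
      define v where "v = x - g"
      have "q - refl_hp \<xi> lam g = v - (2 * (v \<bullet> \<xi>)) *\<^sub>R \<xi>"
        by (simp add: x(3) refl_hp_def v_def algebra_simps inner_diff_left)
      then have "(norm (q - refl_hp \<xi> lam g))\<^sup>2 = (norm v)\<^sup>2"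
        using norm_sub_scaled_sq[OF xi, of v "2 * (v \<bullet> \<xi>)"] by (simp add: power2_eq_square)
      then have "norm (q - refl_hp \<xi> lam g) = norm v" by simp
      then have "norm (q - refl_hp \<xi> lam g) < \<delta>" using g(2) by (simp add: v_def dist_norm)
      then have "refl_hp \<xi> lam g + (q - refl_hp \<xi> lam g) \<in> \<Omega>" using sum_in Rg by blast
      then show ?thesis by simp
    next
      case False
      define a where "a = x \<bullet> \<xi> - lam"
      define b where "b = g \<bullet> \<xi> - lam"
      have ab: "a > 0" "b \<le> 0" using x(2) False by (auto simp: a_def b_def)
      have qg: "q - g = (x - g) - (2 * a) *\<^sub>R \<xi>"
        by (simp add: x(3) refl_hp_def a_def algebra_simps)
      have xgx: "(x - g) \<bullet> \<xi> = a - b" by (simp add: a_def b_def inner_diff_left)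
      have "(norm (q - g))\<^sup>2 = (norm (x - g))\<^sup>2 - 2 * (2 * a) * ((x - g) \<bullet> \<xi>) + (2 * a)\<^sup>2"
        unfolding qg by (rule norm_sub_scaled_sq[OF xi])
      also have "\<dots> = (norm (x - g))\<^sup>2 + 4 * a * b" unfolding xgx by (simp add: power2_eq_square algebra_simps)
      finally have "(norm (q - g))\<^sup>2 = (norm (x - g))\<^sup>2 + 4 * a * b" .
      moreover have "a * b \<le> 0" using ab by (simp add: mult_nonneg_nonpos)
      ultimately have "(norm (q - g))\<^sup>2 \<le> (norm (x - g))\<^sup>2" by linarith
      then have "norm (q - g) \<le> norm (x - g)" by (rule power2_le_imp_le) simp
      then have "norm (q - g) < \<delta>" using g(2) by (simp add: dist_norm)
      then have "g + (q - g) \<in> \<Omega>" using sum_in g(1) by blast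
      then show ?thesis by simp
    qed
  qed
  show ?thesis using P1 P2 by blast
qed

end
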